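(* Let $M$ be a finite abelian group of exponent greater than $2$, and let $f$ be a half-automorphism of $L_M$. Then $f((1,M))=(1,M)$, where $(1,M)=\{(1,x):x\in M\}$.
   Context: Let $K=\{1,a,b,c\}$ be the Klein four-group. Set $L_M=K\times M$ with the operation $(A,x)*(B,y)=(AB,xy)$ if $B=1$, and $(A,x)*(B,y)=(AB,x^{-1}y)$ if $B\neq 1$. A half-automorphism of a loop $L$ is a bijection $f:L\to L$ such that $f(XY)\in\{f(X)f(Y),f(Y)f(X)\}$ for all $X,Y\in L$. *)

theory Defs
  imports Main
begin

datatype klein = K1 | Ka | Kb | Kc

fun kmult :: "klein \<Rightarrow> klein \<Rightarrow> klein" where
  "kmult K1 y = y"
| "kmult x K1 = x"
| "kmult Ka Ka = K1" | "kmult Kb Kb = K1" | "kmult Kc Kc = K1"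
| "kmult Ka Kb = Kc" | "kmult Kb Ka = Kc"
| "kmult Ka Kc = Kb" | "kmult Kc Ka = Kb"
| "kmult Kb Kc = Ka" | "kmult Kc Kb = Ka"

text \<open>The loop L_M = K x M, with M an abelian group written additively
  (so the paper's x^{-1} y is (-x) + y).\<close>
definition Lmult :: "klein \<times> 'a::ab_group_add \<Rightarrow> klein \<times> 'a \<Rightarrow> klein \<times> 'a" where
  "Lmult X Y = (case X of (A, x) \<Rightarrow> case Y of (B, y) \<Rightarrow>
      if B = K1 then (kmult A B, x + y) else (kmult A B, - x + y))"

definition half_automorphism :: "(klein \<times> 'a::ab_group_add \<Rightarrow> klein \<times> 'a) \<Rightarrow> bool" where
  "half_automorphism f \<longleftrightarrow> bij f \<and>
     (\<forall>X Y. f (Lmult X Y) \<in> {Lmult (f X) (f Y), Lmult (f Y) (f X)})"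

definition group_exponent :: "'a::ab_group_add itself \<Rightarrow> nat" where
  "group_exponent _ = (LEAST n. 0 < n \<and> (\<forall>x::'a. ((plus x) ^^ n) 0 = 0))"

end

theory Submission
  imports Defs
begin

lemma kmult_self[simp]: "kmult C C = K1"
  by (cases C) auto

lemma Lmult_self: "Lmult (C,u) (C,u) = (if C = K1 then (K1, u+u) else (K1, 0))"
  by (cases C) (auto simp: Lmult_def)

lemma exists_nontriv:
  assumes "group_exponent TYPE('a::{ab_group_add, finite}) > 2"
  shows "\<exists>y::'a. y + y \<noteq> 0"
proof (rule ccontr)
  assume "\<not> ?thesis"
  then have h: "\<forall>x::'a. x + x = 0" by simp
  have "group_exponent TYPE('a) \<le> 2"
    unfolding group_exponent_def
    by (rule Least_le) (simp add: h numeral_2_eq_2)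
  with assms show False by simp
qed

lemma ha_sq:
  assumes "half_automorphism f"
  shows "f (Lmult X X) = Lmult (f X) (f X)"
proof -
  have "f (Lmult X X) \<in> {Lmult (f X) (f X), Lmult (f X) (f X)}"
    using assms unfolding half_automorphism_def by blast
  then show ?thesis by simp
qed

lemma ha_id:
  fixes f :: "klein \<times> 'a::ab_group_add \<Rightarrow> klein \<times> 'a"
  assumes "half_automorphism f"
  shows "f (K1, 0) = (K1, 0)"
proof -
  obtain C u where fe: "f (K1,0) = (C,u)" by fastforce
  have "f (Lmult (K1,0) (K1,0)) = Lmult (f (K1,0)) (f (K1,0))" by (rule ha_sq[OF assms])
  moreover have "Lmult (K1,0) (K1,(0::'a)) = (K1,0)" by (simp add: Lmult_def)
  ultimately have "(C,u) = Lmult (C,u) (C,u)" using fe by simp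
  then show ?thesis using fe by (auto simp: Lmult_self split: if_splits)
qed

lemma ha_big:
  fixes f :: "klein \<times> 'a::ab_group_add \<Rightarrow> klein \<times> 'a"
  assumes "half_automorphism f" and "z + z \<noteq> 0"
  shows "fst (f (K1, z)) = K1"
proof (rule ccontr)
  assume nz: "fst (f (K1, z)) \<noteq> K1"
  obtain C u where fz: "f (K1,z) = (C,u)" by fastforce
  have "f (Lmult (K1,z) (K1,z)) = Lmult (f (K1,z)) (f (K1,z))" by (rule ha_sq[OF assms(1)])
  then have "f (K1, z+z) = (K1, 0)" using fz nz by (simp add: Lmult_self Lmult_def)
  also have "\<dots> = f (K1, 0)" using ha_id[OF assms(1)] by simp
  finally have "(K1, z+z) = (K1, (0::'a))"
    using assms(1) unfolding half_automorphism_def bij_def inj_def by blast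
  with assms(2) show False by simp
qed

lemma ha_all:
  fixes f :: "klein \<times> 'a::ab_group_add \<Rightarrow> klein \<times> 'a" and y x :: 'a
  assumes "half_automorphism f" and "y + y \<noteq> 0"
  shows "fst (f (K1, x)) = K1"
proof -
  have e: "Lmult (K1, x + y) (K1, -y) = (K1, x)" by (simp add: Lmult_def)
  show ?thesis
  proof (cases "x + x = 0")
    case False then show ?thesis using ha_big[OF assms(1)] by blast
  next
    case True
    have a: "(x + y) + (x + y) \<noteq> 0"
    proof
      assume "(x + y) + (x + y) = 0"
      then have "(x + x) + (y + y) = 0" by (simp add: algebra_simps)
      with True assms(2) show False by simp
    qed
    have b: "(-y) + (-y) \<noteq> 0"
    proof
      assume "(-y) + (-y) = 0"
      then have "-(y + y) = 0" by (simp only: minus_add_distrib)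
      then have "y + y = 0" using neg_equal_0_iff_equal by blast
      with assms(2) show False by blast
    qed
    have f1: "fst (f (K1, x+y)) = K1" by (rule ha_big[OF assms(1) a])
    have f2: "fst (f (K1, -y)) = K1" by (rule ha_big[OF assms(1) b])
    have "f (K1, x) \<in> {Lmult (f (K1, x+y)) (f (K1,-y)), Lmult (f (K1,-y)) (f (K1, x+y))}"
      using assms(1) e unfolding half_automorphism_def by metis
    with f1 f2 show ?thesis
      by (auto simp: Lmult_def split: prod.splits)
  qed
qed

theorem proposition4p1:
  fixes f :: "klein \<times> 'a::{ab_group_add, finite} \<Rightarrow> klein \<times> 'a"
  assumes "group_exponent TYPE('a) > 2"
    and "half_automorphism f"
  shows "f ` {(K1, x) | x. True} = {(K1, x) | x. True}"
proof -
  obtain y :: 'a where y: "y + y \<noteq> 0" using exists_nontriv[OF assms(1)] by blast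
  let ?S = "{(K1, x) | x::'a. True}"
  have sub: "f ` ?S \<subseteq> ?S"
  proof
    fix p assume "p \<in> f ` ?S"
    then obtain x where p: "p = f (K1, x)" by blast
    have "fst p = K1" using ha_all[OF assms(2) y] p by simp
    then show "p \<in> ?S" by (cases p) auto
  qed
  have inj: "inj f" using assms(2) unfolding half_automorphism_def bij_def by blast
  have "?S = Pair K1 ` UNIV" by auto
  then have fin: "finite ?S" by simp
  have "card (f ` ?S) = card ?S" using inj by (simp add: card_image inj_on_subset)
  then show ?thesis using card_subset_eq[OF fin sub] by simp
qed

end
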